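(* Let $v$ be an integrable function on $[0,\infty)$ satisfying $m\le v(x)\le M$ for all $x\in[0,\infty)$, where $m,M\in\mathbb{R}$. Then for all $x>0$, $\alpha>0$, $\rho>0$, $\delta>0$ and $\beta,\eta,k,\lambda\in\mathbb{R}$, $$M\,\Lambda^{\rho,\beta}_{x,k}(\alpha,\eta)\,{}^{\rho}\mathcal{J}^{\delta,\lambda}_{\eta,k}v(x)+m\,\Lambda^{\rho,\lambda}_{x,k}(\delta,\eta)\,{}^{\rho}\mathcal{J}^{\alpha,\beta}_{\eta,k}v(x)\ \ge\ {}^{\rho}\mathcal{J}^{\alpha,\beta}_{\eta,k}v(x)\,{}^{\rho}\mathcal{J}^{\delta,\lambda}_{\eta,k}v(x)+mM\,\Lambda^{\rho,\beta}_{x,k}(\alpha,\eta)\,\Lambda^{\rho,\lambda}_{x,k}(\delta,\eta).$$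
   Context: For a function $f$ on $[0,\infty)$, $x>0$, $\alpha>0$, $\rho>0$ and $\beta,\eta,k\in\mathbb{R}$, the generalized Katugampola fractional integral is $${}^{\rho}\mathcal{J}^{\alpha,\beta}_{\eta,k}f(x)=\frac{\rho^{1-\beta}x^{k}}{\Gamma(\alpha)}\int_0^x\frac{\tau^{\rho(\eta+1)-1}}{(x^\rho-\tau^\rho)^{1-\alpha}}f(\tau)\,d\tau,$$ defined whenever the integral exists; all such integrals appearing are assumed to exist. Also $$\Lambda^{\rho,\beta}_{x,k}(\alpha,\eta)=\frac{\Gamma(\eta+1)}{\Gamma(\eta+\alpha+1)}\rho^{-\beta}x^{k+\rho(\eta+\alpha)}.$$ *)

theory Defs
  imports "HOL-Analysis.Analysis"
begin

definition katu_kernel :: "real \<Rightarrow> real \<Rightarrow> real \<Rightarrow> real \<Rightarrow> real \<Rightarrow> real" where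
  "katu_kernel \<rho> \<alpha> \<eta> x \<tau> =
     \<tau> powr (\<rho> * (\<eta> + 1) - 1) / (x powr \<rho> - \<tau> powr \<rho>) powr (1 - \<alpha>)"

definition katuJ :: "real \<Rightarrow> real \<Rightarrow> real \<Rightarrow> real \<Rightarrow> real \<Rightarrow> (real \<Rightarrow> real) \<Rightarrow> real \<Rightarrow> real" where
  "katuJ \<rho> \<alpha> \<beta> \<eta> k f x =
     \<rho> powr (1 - \<beta>) * x powr k / Gamma \<alpha> *
     (LINT \<tau>:{0..x}|lborel. katu_kernel \<rho> \<alpha> \<eta> x \<tau> * f \<tau>)"

definition katuLambda :: "real \<Rightarrow> real \<Rightarrow> real \<Rightarrow> real \<Rightarrow> real \<Rightarrow> real \<Rightarrow> real" where
  "katuLambda \<rho> \<beta> x k \<alpha> \<eta> =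
     Gamma (\<eta> + 1) / Gamma (\<eta> + \<alpha> + 1) * \<rho> powr (- \<beta>) * x powr (k + \<rho> * (\<eta> + \<alpha>))"

end

theory Submission
  imports Defs
begin

lemma kernel_subst_eq:
  fixes \<rho> \<alpha> \<eta> x u :: real
  assumes x: "x > 0" and r: "\<rho> > 0" and u: "0 < u" "u < 1"
  shows "katu_kernel \<rho> \<alpha> \<eta> x (x * u powr (1/\<rho>)) * (x / \<rho> * u powr (1/\<rho> - 1))
       = x powr (\<rho> * (\<eta> + \<alpha>)) / \<rho> * (u powr (\<eta> + 1 - 1) * (1 - u) powr (\<alpha> - 1))"
proof -
  have g1: "(x * u powr (1/\<rho>)) powr (\<rho> * (\<eta> + 1) - 1) = x powr (\<rho> * (\<eta> + 1) - 1) * u powr ((\<rho> * (\<eta> + 1) - 1)/\<rho>)"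
    using x u by (simp add: powr_mult powr_powr)
  have g2: "(x * u powr (1/\<rho>)) powr \<rho> = x powr \<rho> * u"
    using x u r by (simp add: powr_mult powr_powr)
  have g3: "(x powr \<rho> - x powr \<rho> * u) powr (1 - \<alpha>) = x powr (\<rho> * (1 - \<alpha>)) * (1 - u) powr (1 - \<alpha>)"
  proof -
    have "x powr \<rho> - x powr \<rho> * u = x powr \<rho> * (1 - u)" by (simp add: algebra_simps)
    then show ?thesis using x u by (simp add: powr_mult powr_powr)
  qed
  have "katu_kernel \<rho> \<alpha> \<eta> x (x * u powr (1/\<rho>)) * (x / \<rho> * u powr (1/\<rho> - 1))
     = x powr (\<rho> * (\<eta> + 1) - 1) * u powr ((\<rho> * (\<eta> + 1) - 1)/\<rho>) / (x powr (\<rho> * (1 - \<alpha>)) * (1 - u) powr (1 - \<alpha>)) * (x / \<rho> * u powr (1/\<rho> - 1))"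
    unfolding katu_kernel_def g1 g2 g3 by simp
  also have "\<dots> = (x powr (\<rho> * (\<eta> + 1) - 1) * x powr (- (\<rho> * (1 - \<alpha>))) * x powr 1) / \<rho> * (u powr ((\<rho> * (\<eta> + 1) - 1)/\<rho>) * u powr (1/\<rho> - 1)) * (1 - u) powr (- (1 - \<alpha>))"
    using x u r apply (simp add: powr_minus field_simps)
    by (simp add: powr_add[symmetric])
  also have "\<dots> = x powr (\<rho> * (\<eta> + \<alpha>)) / \<rho> * (u powr (\<eta> + 1 - 1) * (1 - u) powr (\<alpha> - 1))"
  proof -
    have e1: "\<rho> * (\<eta> + 1) - 1 + - (\<rho> * (1 - \<alpha>)) + 1 = \<rho> * (\<eta> + \<alpha>)" by (simp add: algebra_simps)
    have e2: "(\<rho> * (\<eta> + 1) - 1)/\<rho> + (1/\<rho> - 1) = \<eta> + 1 - 1" using r by (simp add: field_simps)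
    have e3: "- (1 - \<alpha>) = \<alpha> - 1" by simp
    show ?thesis by (simp only: powr_add[symmetric] e1 e2 e3)
  qed
  finally show ?thesis .
qed

lemma kernel_integral:
  fixes \<rho> \<alpha> \<eta> x :: real
  assumes x: "x > 0" and r: "\<rho> > 0" and a: "\<alpha> > 0" and e: "\<eta> > -1"
  shows "(LINT \<tau>:{0..x}|lborel. katu_kernel \<rho> \<alpha> \<eta> x \<tau>) = x powr (\<rho> * (\<eta> + \<alpha>)) / \<rho> * Beta (\<eta> + 1) \<alpha>"
proof -
  define C where "C = x powr (\<rho> * (\<eta> + \<alpha>)) / \<rho>"
  define g where "g u = x * u powr (1/\<rho>)" for u
  define g' where "g' u = x / \<rho> * u powr (1/\<rho> - 1)" for u
  define f where "f = katu_kernel \<rho> \<alpha> \<eta> x"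
  have eq: "f (g u) * g' u = C * (u powr (\<eta> + 1 - 1) * (1 - u) powr (\<alpha> - 1))" if "0 < u" "u < 1" for u
    unfolding f_def g_def g'_def C_def using kernel_subst_eq[OF x r that] .
  have intB: "set_integrable lborel {0..1} (\<lambda>t. t powr (\<eta> + 1 - 1) * (1 - t) powr (\<alpha> - 1))"
    using integrable_Beta[of "\<eta>+1" \<alpha>] e a by simp
  have intB': "set_integrable lborel {0<..<1} (\<lambda>t. C * (t powr (\<eta> + 1 - 1) * (1 - t) powr (\<alpha> - 1)))"
    by (rule set_integrable_mult_right, rule set_integrable_subset[OF intB]) auto
  have intfg: "set_integrable lborel (einterval (ereal 0) (ereal 1)) (\<lambda>u. f (g u) * g' u)"
  proof -
    have "set_integrable lborel {0<..<1} (\<lambda>u. f (g u) * g' u)"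
      using intB' by (subst set_integrable_cong[OF refl refl]) (auto simp: eq)
    then show ?thesis by (simp only: einterval_eq_Icc)
  qed
  have deriv: "DERIV g u :> g' u" if "0 < u" for u
    unfolding g_def g'_def using that r by (auto intro!: derivative_eq_intros simp: field_simps)
  have contf: "isCont f (g u)" if "0 < u" "u < 1" for u
  proof -
    have "u powr (1/\<rho>) < 1 powr (1/\<rho>)" using that r by (intro powr_less_mono2) auto
    then have gu: "0 < g u" "g u < x" unfolding g_def using x that by auto
    have "(g u) powr \<rho> < x powr \<rho>" using gu r by (simp add: powr_less_mono2)
    then show ?thesis unfolding f_def katu_kernel_def using gu
      by (auto intro!: continuous_intros)
  qed
  have contg': "isCont g' u" if "0 < u" for u
    unfolding g'_def using that r by (auto intro!: continuous_intros)
  have "(g \<longlongrightarrow> x * 0) (at_right 0)"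
    unfolding g_def using r
    by (intro tendsto_mult tendsto_const tendsto_zero_powrI[where b="1/\<rho>"] tendsto_ident_at)
       (auto simp: eventually_at_filter)
  then have lim0: "((ereal \<circ> g \<circ> real_of_ereal) \<longlongrightarrow> ereal 0) (at_right (ereal 0))"
    by (simp add: ereal_tendsto_simps1 ereal_tendsto_simps2 comp_assoc[symmetric])
  have "(g \<longlongrightarrow> x * 1 powr (1/\<rho>)) (at_left 1)"
    unfolding g_def by (intro tendsto_intros) auto
  then have lim1: "((ereal \<circ> g \<circ> real_of_ereal) \<longlongrightarrow> ereal x) (at_left (ereal 1))"
    by (simp add: ereal_tendsto_simps1 ereal_tendsto_simps2 comp_assoc[symmetric])
  have "(LBINT t=ereal 0..ereal x. f t) = (LBINT u=ereal 0..ereal 1. f (g u) * g' u)"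
    apply (rule interval_integral_substitution_nonneg(2)[of "ereal 0" "ereal 1" g g' f "ereal 0" "ereal x"])
    using deriv contf lim0 lim1 intfg r x contg'
    by (auto simp: g'_def f_def katu_kernel_def)
  also have "\<dots> = (LINT u:{0<..<1}|lborel. f (g u) * g' u)"
    by (simp add: interval_integral_Ioo)
  also have "\<dots> = (LINT u:{0<..<1}|lborel. C * (u powr (\<eta> + 1 - 1) * (1 - u) powr (\<alpha> - 1)))"
    by (rule set_lebesgue_integral_cong) (auto simp: eq)
  also have "\<dots> = C * (LINT u:{0<..<1}|lborel. (u powr (\<eta> + 1 - 1) * (1 - u) powr (\<alpha> - 1)))"
    by (simp add: set_integral_mult_right)
  also have "(LINT u:{0<..<1}|lborel. (u powr (\<eta> + 1 - 1) * (1 - u) powr (\<alpha> - 1)))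
      = (LINT u:{0..1}|lborel. (u powr (\<eta> + 1 - 1) * (1 - u) powr (\<alpha> - 1)))"
  proof -
    have h1: "(LBINT u=ereal 0..ereal 1. u powr (\<eta> + 1 - 1) * (1 - u) powr (\<alpha> - 1))
       = (LINT u:{0<..<1}|lborel. (u powr (\<eta> + 1 - 1) * (1 - u) powr (\<alpha> - 1)))"
      using interval_integral_Ioo[of "ereal 0" "ereal 1"] by simp
    have h2: "(LBINT u=ereal 0..ereal 1. u powr (\<eta> + 1 - 1) * (1 - u) powr (\<alpha> - 1))
       = (LINT u:{0..1}|lborel. (u powr (\<eta> + 1 - 1) * (1 - u) powr (\<alpha> - 1)))"
      using interval_integral_Icc[of 0 1] by simp
    show ?thesis using h1 h2 by simp
  qed
  also have "\<dots> = Beta (\<eta> + 1) \<alpha>"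
    using set_borel_integral_eq_integral(2)[OF intB] has_integral_Beta_real[of "\<eta>+1" \<alpha>] e a
    by (simp add: integral_unique)
  finally show ?thesis
    using interval_integral_Icc[of 0 x "katu_kernel \<rho> \<alpha> \<eta> x"] x by (simp add: C_def f_def)
qed

lemma eta_gt:
  fixes \<rho> \<alpha> \<eta> x :: real
  assumes x: "x > 0" and r: "\<rho> > 0"
    and int: "set_integrable lborel {0..x} (\<lambda>\<tau>. katu_kernel \<rho> \<alpha> \<eta> x \<tau>)"
  shows "\<eta> > -1"
proof (rule ccontr)
  assume "\<not> \<eta> > -1"
  then have "\<eta> + 1 \<le> 0" by simp
  then have c1: "\<rho> * (\<eta> + 1) \<le> 0" using r by (intro mult_nonneg_nonpos) auto
  define c where "c = \<rho> * (\<eta> + 1) - 1"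
  define b where "b = x / 2"
  have b: "0 < b" "b < x" using x by (auto simp: b_def)
  define D where "D \<tau> = (x powr \<rho> - \<tau> powr \<rho>) powr (1 - \<alpha>)" for \<tau>
  define K where "K = katu_kernel \<rho> \<alpha> \<eta> x"
  have K_nonneg: "K \<tau> \<ge> 0" for \<tau> unfolding K_def katu_kernel_def by simp
  have Dpos: "D \<tau> > 0" if "0 \<le> \<tau>" "\<tau> \<le> b" for \<tau>
  proof -
    have "\<tau> powr \<rho> < x powr \<rho>" using that b r by (intro powr_less_mono2) auto
    then show ?thesis unfolding D_def by simp
  qed
  have contD: "continuous_on {0..b} D"
  proof -
    have "continuous_on {0..b} (\<lambda>\<tau>. \<tau> powr \<rho>)"
      using r by (intro continuous_on_powr') (auto intro!: continuous_intros)
    moreover have "\<forall>\<tau>\<in>{0..b}. \<tau> powr \<rho> < x powr \<rho>"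
      using b r by (auto intro!: powr_less_mono2)
    ultimately show ?thesis unfolding D_def using x r
      by (intro continuous_on_powr' continuous_intros) auto
  qed
  obtain t0 where t0: "t0 \<in> {0..b}" "\<And>y. y \<in> {0..b} \<Longrightarrow> D y \<le> D t0"
    using continuous_attains_sup[OF compact_Icc _ contD] b by auto
  define Dm where "Dm = D t0"
  have Dm: "Dm > 0" using Dpos t0 by (auto simp: Dm_def)
  define \<kappa> where "\<kappa> = b powr (c + 1) / Dm"
  have \<kappa>: "\<kappa> > 0" using Dm b by (simp add: \<kappa>_def)
  have Kge: "\<kappa> / \<tau> \<le> K \<tau>" if "0 < \<tau>" "\<tau> \<le> b" for \<tau>
  proof -
    have "b powr (c + 1) \<le> \<tau> powr (c + 1)"
      using that c1 by (intro powr_mono2') (auto simp: c_def)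
    also have "\<tau> powr (c + 1) = \<tau> powr c * \<tau>" using that by (simp add: powr_add)
    finally have h: "b powr (c + 1) / \<tau> \<le> \<tau> powr c" using that by (simp add: field_simps)
    have "\<kappa> / \<tau> = (b powr (c + 1) / \<tau>) / Dm" by (simp add: \<kappa>_def)
    also have "\<dots> \<le> \<tau> powr c / Dm" using Dm by (intro divide_right_mono[OF h]) simp
    also have "\<dots> \<le> \<tau> powr c / D \<tau>"
      using t0 that Dpos[of \<tau>] Dm by (intro divide_left_mono) (auto simp: Dm_def intro!: mult_pos_pos)
    also have "\<dots> = K \<tau>" by (simp add: K_def katu_kernel_def D_def c_def)
    finally show ?thesis .
  qed
  have Kint: "K integrable_on {0..x}"
    using set_borel_integral_eq_integral(1)[OF int] by (simp add: K_def)
  define I where "I = integral {0..x} K"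
  define \<epsilon> where "\<epsilon> = b * exp (- (I / \<kappa> + 1))"
  have \<epsilon>: "0 < \<epsilon>" "\<epsilon> < b"
  proof -
    have "I \<ge> 0" unfolding I_def using Kint K_nonneg by (intro integral_nonneg) auto
    then have "I / \<kappa> \<ge> 0" using \<kappa> by simp
    then have "exp (- (I / \<kappa> + 1)) < 1" by simp
    then show "0 < \<epsilon>" "\<epsilon> < b" using b by (auto simp: \<epsilon>_def)
  qed
  have FTC: "((\<lambda>\<tau>. \<kappa> / \<tau>) has_integral (\<kappa> * ln b - \<kappa> * ln \<epsilon>)) {\<epsilon>..b}"
  proof (rule fundamental_theorem_of_calculus)
    show "\<epsilon> \<le> b" using \<epsilon> by simp
    fix t assume "t \<in> {\<epsilon>..b}"
    then have "t > 0" using \<epsilon> by auto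
    then show "((\<lambda>t. \<kappa> * ln t) has_vector_derivative \<kappa> / t) (at t within {\<epsilon>..b})"
      by (auto intro!: derivative_eq_intros simp: has_real_derivative_iff_has_vector_derivative[symmetric])
  qed
  have "\<kappa> * ln b - \<kappa> * ln \<epsilon> \<le> integral {\<epsilon>..b} K"
  proof -
    have "integral {\<epsilon>..b} (\<lambda>\<tau>. \<kappa> / \<tau>) \<le> integral {\<epsilon>..b} K"
      using \<epsilon> b Kge by (intro integral_le has_integral_integrable[OF FTC] integrable_on_subinterval[OF Kint]) auto
    then show ?thesis using integral_unique[OF FTC] by simp
  qed
  also have "\<dots> \<le> I" unfolding I_def
    using \<epsilon> b Kint K_nonneg by (intro integral_subset_le integrable_on_subinterval[OF Kint]) auto
  finally have "\<kappa> * ln b - \<kappa> * ln \<epsilon> \<le> I" .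
  moreover have "ln \<epsilon> = ln b - (I / \<kappa> + 1)" using b by (simp add: \<epsilon>_def ln_mult)
  ultimately show False using \<kappa> by (simp add: algebra_simps)
qed

lemma J_bounds:
  fixes v :: "real \<Rightarrow> real" and m M x \<alpha> \<rho> \<beta> \<eta> k :: real
  assumes v_bounds: "\<And>t. t \<ge> 0 \<Longrightarrow> m \<le> v t \<and> v t \<le> M"
    and x: "x > 0" and a: "\<alpha> > 0" and r: "\<rho> > 0"
    and ex_J: "set_integrable lborel {0..x} (\<lambda>\<tau>. katu_kernel \<rho> \<alpha> \<eta> x \<tau> * v \<tau>)"
    and ex_J1: "set_integrable lborel {0..x} (\<lambda>\<tau>. katu_kernel \<rho> \<alpha> \<eta> x \<tau>)"
  shows "m * katuLambda \<rho> \<beta> x k \<alpha> \<eta> \<le> katuJ \<rho> \<alpha> \<beta> \<eta> k v x"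
    and "katuJ \<rho> \<alpha> \<beta> \<eta> k v x \<le> M * katuLambda \<rho> \<beta> x k \<alpha> \<eta>"
proof -
  have e: "\<eta> > -1" using eta_gt[OF x r ex_J1] .
  define P where "P = \<rho> powr (1 - \<beta>) * x powr k / Gamma \<alpha>"
  have P: "P > 0" using a r x by (simp add: P_def Gamma_real_pos)
  define I1 where "I1 = (LINT \<tau>:{0..x}|lborel. katu_kernel \<rho> \<alpha> \<eta> x \<tau>)"
  define Iv where "Iv = (LINT \<tau>:{0..x}|lborel. katu_kernel \<rho> \<alpha> \<eta> x \<tau> * v \<tau>)"
  have J: "katuJ \<rho> \<alpha> \<beta> \<eta> k v x = P * Iv" by (simp add: katuJ_def P_def Iv_def)
  have L: "katuLambda \<rho> \<beta> x k \<alpha> \<eta> = P * I1"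
  proof -
    have "P * I1 = \<rho> powr (1 - \<beta>) * x powr k / Gamma \<alpha> * (x powr (\<rho> * (\<eta> + \<alpha>)) / \<rho> * (Gamma (\<eta> + 1) * Gamma \<alpha> / Gamma (\<eta> + \<alpha> + 1)))"
      unfolding P_def I1_def kernel_integral[OF x r a e] Beta_def by (simp add: add_ac)
    also have "\<dots> = Gamma (\<eta> + 1) / Gamma (\<eta> + \<alpha> + 1) * (\<rho> powr (1 - \<beta>) / \<rho>) * (x powr k * x powr (\<rho> * (\<eta> + \<alpha>)))"
      using a by (simp add: Gamma_real_pos field_simps less_imp_neq[symmetric])
    also have "\<rho> powr (1 - \<beta>) / \<rho> = \<rho> powr (- \<beta>)"
      using r by (simp add: powr_diff powr_minus_divide)
    also have "x powr k * x powr (\<rho> * (\<eta> + \<alpha>)) = x powr (k + \<rho> * (\<eta> + \<alpha>))"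
      by (simp add: powr_add)
    finally show ?thesis by (simp add: katuLambda_def)
  qed
  have Kn: "katu_kernel \<rho> \<alpha> \<eta> x \<tau> \<ge> 0" for \<tau> by (simp add: katu_kernel_def)
  have "(LINT \<tau>:{0..x}|lborel. katu_kernel \<rho> \<alpha> \<eta> x \<tau> * m) \<le> Iv"
    unfolding Iv_def
    by (rule set_integral_mono) (auto intro: set_integrable_mult_left ex_J1 ex_J mult_left_mono Kn v_bounds[THEN conjunct1])
  then have lo: "m * I1 \<le> Iv" by (simp add: I1_def mult.commute)
  have "Iv \<le> (LINT \<tau>:{0..x}|lborel. katu_kernel \<rho> \<alpha> \<eta> x \<tau> * M)"
    unfolding Iv_def
    by (rule set_integral_mono) (auto intro: set_integrable_mult_left ex_J1 ex_J mult_left_mono Kn v_bounds[THEN conjunct2])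
  then have hi: "Iv \<le> M * I1" by (simp add: I1_def mult.commute)
  show "m * katuLambda \<rho> \<beta> x k \<alpha> \<eta> \<le> katuJ \<rho> \<alpha> \<beta> \<eta> k v x"
    using mult_left_mono[OF lo, of P] P by (simp add: J L algebra_simps)
  show "katuJ \<rho> \<alpha> \<beta> \<eta> k v x \<le> M * katuLambda \<rho> \<beta> x k \<alpha> \<eta>"
    using mult_left_mono[OF hi, of P] P by (simp add: J L algebra_simps)
qed

theorem corollary1:
  fixes v :: "real \<Rightarrow> real" and m M x \<alpha> \<rho> \<delta> \<beta> \<eta> k lam :: real
  assumes v_int: "\<And>t. t > 0 \<Longrightarrow> set_integrable lborel {0..t} v"
    and v_bounds: "\<And>t. t \<ge> 0 \<Longrightarrow> m \<le> v t \<and> v t \<le> M"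
    and x_pos: "x > 0" and \<alpha>_pos: "\<alpha> > 0" and \<rho>_pos: "\<rho> > 0" and \<delta>_pos: "\<delta> > 0"
    and ex_J\<alpha>: "set_integrable lborel {0..x} (\<lambda>\<tau>. katu_kernel \<rho> \<alpha> \<eta> x \<tau> * v \<tau>)"
    and ex_J\<delta>: "set_integrable lborel {0..x} (\<lambda>\<tau>. katu_kernel \<rho> \<delta> \<eta> x \<tau> * v \<tau>)"
    and ex_J\<alpha>1: "set_integrable lborel {0..x} (\<lambda>\<tau>. katu_kernel \<rho> \<alpha> \<eta> x \<tau>)"
    and ex_J\<delta>1: "set_integrable lborel {0..x} (\<lambda>\<tau>. katu_kernel \<rho> \<delta> \<eta> x \<tau>)"
  shows "M * katuLambda \<rho> \<beta> x k \<alpha> \<eta> * katuJ \<rho> \<delta> lam \<eta> k v x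
           + m * katuLambda \<rho> lam x k \<delta> \<eta> * katuJ \<rho> \<alpha> \<beta> \<eta> k v x
         \<ge> katuJ \<rho> \<alpha> \<beta> \<eta> k v x * katuJ \<rho> \<delta> lam \<eta> k v x
           + m * M * katuLambda \<rho> \<beta> x k \<alpha> \<eta> * katuLambda \<rho> lam x k \<delta> \<eta>"
proof -
  define A where "A = katuJ \<rho> \<alpha> \<beta> \<eta> k v x"
  define B where "B = katuJ \<rho> \<delta> lam \<eta> k v x"
  define La where "La = katuLambda \<rho> \<beta> x k \<alpha> \<eta>"
  define Ld where "Ld = katuLambda \<rho> lam x k \<delta> \<eta>"
  have h1: "A \<le> M * La"
    unfolding A_def La_def by (rule J_bounds(2)[OF v_bounds x_pos \<alpha>_pos \<rho>_pos ex_J\<alpha> ex_J\<alpha>1])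
  have h2: "m * Ld \<le> B"
    unfolding B_def Ld_def by (rule J_bounds(1)[OF v_bounds x_pos \<delta>_pos \<rho>_pos ex_J\<delta> ex_J\<delta>1])
  have "0 \<le> (M * La - A) * (B - m * Ld)" using h1 h2 by simp
  then have "A * B + m * M * La * Ld \<le> M * La * B + m * Ld * A" by (simp add: algebra_simps)
  then show ?thesis by (simp add: A_def B_def La_def Ld_def)
qed

end
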